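(* Let $E_0$ be a vertex of a weighted tree and let $\Delta$ be a chain of $(-2)$-vertices $F_1,\dots,F_n$ ($F_j$ adjacent to $F_{j+1}$) such that $E_0$ is adjacent to $F_k$ and to no other vertex of $\Delta$, where $k\ge1$ and $n\ge 2k-1$ (configuration $A_n^k$). Let $(m^{(1)},m^{(2)},\dots)$ be the multiplicity sequence of $\Delta$ at $E_0$. Then: (i) if $k=1$, the sequence is periodic: $(1^n,0,1^n,0,\dots)$; (ii) if $k\ge2$, write $n=lk+r+(k-1)$ with $l\ge1$, $0\le r\le k-1$. If $r<k-1$ the sequence begins $(k^l,r)$; if $r=k-1$ and $k\ge3$ it begins $(k^l,k-1,1)$; if $k=2$ and $r=1$ (so $n=2l+2$) it begins $(2^l,1,1,2^l,0)$. Here $a^l$ denotes $l$ consecutive entries equal to $a$.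
   Context: Let $E_0$ be a vertex and $\Delta$ a connected set of $(-2)$-vertices (each $F\in\Delta$ has $F\cdot F=-2$, adjacent vertices intersect with $1$, others with $0$), with $E_0$ adjacent to exactly one vertex $f\in\Delta$. The multiplicity sequence of $\Delta$ at $E_0$ is defined as follows. Let $\Gamma^{(1)}=\Delta$. Given a connected subset $\Gamma^{(s)}\subseteq\Delta$ containing $f$, let $Y^{(s)}$ be the smallest nonzero cycle supported on $\Gamma^{(s)}$ with $(E_0+Y^{(s)})\cdot F\le 0$ for all $F\in\Gamma^{(s)}$; if $\Gamma^{(s)}$ is empty put $Y^{(s)}=0$. Put $Z^{(1)}=E_0+Y^{(1)}$ and $Z^{(s+1)}=Z^{(s)}+E_0+Y^{(s+1)}$, where $\Gamma^{(s+1)}$ is the connected component containing $f$ of the set $\{F\in\Delta: Z^{(s)}\cdot F=0\}$ (empty if $f$ is not in this set). Then $m^{(s)}$ is the coefficient of $Y^{(s)}$ at $f$. *)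

theory Defs
  imports Main
begin

text \<open>The vertices of \<Delta> have type 'v; D is the (finite) vertex set of \<Delta>;
  ip F G is the intersection number F.G of two vertices of \<Delta>; e F is the intersection
  number E_0.F; f is the unique vertex of \<Delta> adjacent to E_0.
  A cycle supported on \<Delta> is a function 'v \<Rightarrow> int (coefficients); a cycle of the form
  c E_0 + Y is represented by the pair (c, Y).\<close>

definition cyc_dot :: "('v \<Rightarrow> 'v \<Rightarrow> int) \<Rightarrow> 'v set \<Rightarrow> ('v \<Rightarrow> int) \<Rightarrow> 'v \<Rightarrow> int" where
  "cyc_dot ip D Y F = (\<Sum>x\<in>D. Y x * ip x F)"

definition is_cand :: "('v \<Rightarrow> 'v \<Rightarrow> int) \<Rightarrow> ('v \<Rightarrow> int) \<Rightarrow> 'v set \<Rightarrow> 'v set \<Rightarrow> ('v \<Rightarrow> int) \<Rightarrow> bool" where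
  "is_cand ip e D \<Gamma> Y \<longleftrightarrow> (\<forall>x. x \<notin> \<Gamma> \<longrightarrow> Y x = 0) \<and> Y \<noteq> (\<lambda>_. 0) \<and>
     (\<forall>F\<in>\<Gamma>. e F + cyc_dot ip D Y F \<le> 0)"

definition minY :: "('v \<Rightarrow> 'v \<Rightarrow> int) \<Rightarrow> ('v \<Rightarrow> int) \<Rightarrow> 'v set \<Rightarrow> 'v set \<Rightarrow> ('v \<Rightarrow> int)" where
  "minY ip e D \<Gamma> = (if \<Gamma> = {} then (\<lambda>_. 0) else
     (THE Y. is_cand ip e D \<Gamma> Y \<and> (\<forall>Y'. is_cand ip e D \<Gamma> Y' \<longrightarrow> (\<forall>x. Y x \<le> Y' x))))"

definition comp_of :: "('v \<Rightarrow> 'v \<Rightarrow> int) \<Rightarrow> 'v set \<Rightarrow> 'v \<Rightarrow> 'v set" where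
  "comp_of ip S x = (if x \<in> S then
     {y. (x, y) \<in> {(a, b). a \<in> S \<and> b \<in> S \<and> a \<noteq> b \<and> ip a b \<noteq> 0}\<^sup>*} else {})"

text \<open>State at stage s+1: (\<Gamma>^(s+1), Y^(s+1), E_0-coefficient of Z^(s+1), \<Delta>-part of Z^(s+1)).\<close>
primrec ms_state :: "('v \<Rightarrow> 'v \<Rightarrow> int) \<Rightarrow> ('v \<Rightarrow> int) \<Rightarrow> 'v set \<Rightarrow> 'v \<Rightarrow> nat \<Rightarrow>
    'v set \<times> ('v \<Rightarrow> int) \<times> int \<times> ('v \<Rightarrow> int)" where
  "ms_state ip e D f 0 = (D, minY ip e D D, 1, minY ip e D D)"
| "ms_state ip e D f (Suc s) =
    (case ms_state ip e D f s of (\<Gamma>, Y, c, Z) \<Rightarrow>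
      (let \<Gamma>' = comp_of ip {F \<in> D. c * e F + cyc_dot ip D Z F = 0} f;
           Y' = minY ip e D \<Gamma>'
       in (\<Gamma>', Y', c + 1, \<lambda>x. Z x + Y' x)))"

text \<open>Multiplicity sequence, indexed from 1: mult_seq ... s = m^(s) for s \<ge> 1.\<close>
definition mult_seq :: "('v \<Rightarrow> 'v \<Rightarrow> int) \<Rightarrow> ('v \<Rightarrow> int) \<Rightarrow> 'v set \<Rightarrow> 'v \<Rightarrow> nat \<Rightarrow> int" where
  "mult_seq ip e D f s = fst (snd (ms_state ip e D f (s - 1))) f"

text \<open>Configuration A_n^k: chain F_1,...,F_n of (-2)-vertices (indexed by 1..n), E_0 meeting F_k only.\<close>
definition chain_ip :: "nat \<Rightarrow> nat \<Rightarrow> int" where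
  "chain_ip i j = (if i = j then -2 else if i = j + 1 \<or> j = i + 1 then 1 else 0)"

definition chain_e :: "nat \<Rightarrow> nat \<Rightarrow> int" where
  "chain_e k j = (if j = k then 1 else 0)"

definition chain_mult_seq :: "nat \<Rightarrow> nat \<Rightarrow> nat \<Rightarrow> int" where
  "chain_mult_seq n k = mult_seq chain_ip (chain_e k) {1..n} k"

end

theory Submission
  imports Defs
begin

lemma chain_dot:
  assumes supp: "\<forall>x. x \<notin> {1..n} \<longrightarrow> Y x = 0" and F: "F \<in> {1..n}"
  shows "cyc_dot chain_ip {1..n} Y F = Y (F-1) + Y (F+1) - 2 * Y F"
proof -
  have eq: "\<And>x. x \<in> {1..n} \<Longrightarrow> Y x * chain_ip x F = (if x = F - 1 then Y x else 0) + (if x = F + 1 then Y x else 0) + (if x = F then -2 * Y x else 0)"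
    using F by (auto simp: chain_ip_def)
  have "cyc_dot chain_ip {1..n} Y F = (\<Sum>x\<in>{1..n}. (if x = F - 1 then Y x else 0) + (if x = F + 1 then Y x else 0) + (if x = F then -2 * Y x else 0))"
    unfolding cyc_dot_def by (rule sum.cong[OF refl eq])
  also have "\<dots> = Y (F-1) + Y (F+1) - 2 * Y F"
    using F supp by (simp add: sum.distrib)
  finally show ?thesis .
qed

definition tent :: "nat \<Rightarrow> nat \<Rightarrow> nat \<Rightarrow> nat \<Rightarrow> int" where
 "tent k a b x = (if a \<le> x \<and> x \<le> b then min (int x - int a + 1) (min (min (int k - int a + 1) (int b - int k + 1)) (int b + 1 - int x)) else 0)"

lemma int_defect:
  fixes a b k x :: int
  assumes "a \<le> x" "x \<le> b" "a \<le> k" "k \<le> b"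
  defines "m \<equiv> min (k - a + 1) (b - k + 1)"
  shows "(if x = k then 1 else 0) + min (x - 1 - a + 1) (min m (b + 1 - (x - 1)))
     + min (x + 1 - a + 1) (min m (b + 1 - (x + 1))) - 2 * min (x - a + 1) (min m (b + 1 - x))
     = (if x = a + b - k then -1 else 0)"
  using assms unfolding m_def min_def by (auto split: if_splits)

lemma tent_alt:
  assumes "a \<le> k" "k \<le> b" "a \<le> x + 1" "x \<le> b + 1"
  shows "tent k a b x = min (int x - int a + 1) (min (min (int k - int a + 1) (int b - int k + 1)) (int b + 1 - int x))"
  using assms unfolding tent_def min_def by auto

lemma tent_defect:
  assumes "1 \<le> a" "a \<le> k" "k \<le> b" "b \<le> n" "F \<in> {1..n}"
  shows "chain_e k F + cyc_dot chain_ip {1..n} (tent k a b) F =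
     (if F + 1 = a \<or> F = b + 1 then 1 else if F = a + b - k then -1 else 0)"
proof -
  have dot: "cyc_dot chain_ip {1..n} (tent k a b) F = tent k a b (F-1) + tent k a b (F+1) - 2 * tent k a b F"
    by (rule chain_dot) (use assms in \<open>auto simp: tent_def\<close>)
  consider "F + 1 < a" | "F + 1 = a" | "a \<le> F \<and> F \<le> b" | "F = b + 1" | "F > b + 1" by linarith
  then show ?thesis
  proof cases
    case 1 then show ?thesis using assms dot by (auto simp: tent_def chain_e_def)
  next
    case 2 then show ?thesis using assms dot by (auto simp: tent_def chain_e_def)
  next
    case 4 then show ?thesis using assms dot by (auto simp: tent_def chain_e_def)
  next
    case 5 then show ?thesis using assms dot by (auto simp: tent_def chain_e_def)
  next
    case 3
    have e1: "tent k a b (F-1) = min (int F - 1 - int a + 1) (min (min (int k - int a + 1) (int b - int k + 1)) (int b + 1 - (int F - 1)))"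
    proof -
      have "tent k a b (F-1) = min (int (F-1) - int a + 1) (min (min (int k - int a + 1) (int b - int k + 1)) (int b + 1 - int (F-1)))"
        by (rule tent_alt) (use 3 assms in auto)
      moreover have "int (F-1) = int F - 1" using assms by auto
      ultimately show ?thesis by simp
    qed
    have e2: "tent k a b (F+1) = min (int F + 1 - int a + 1) (min (min (int k - int a + 1) (int b - int k + 1)) (int b + 1 - (int F + 1)))"
      using tent_alt[of a k b "F+1"] 3 assms by simp
    have e3: "tent k a b F = min (int F - int a + 1) (min (min (int k - int a + 1) (int b - int k + 1)) (int b + 1 - int F))"
      using tent_alt[of a k b F] 3 assms by simp
    have ek: "chain_e k F = (if int F = int k then 1 else 0)" by (simp add: chain_e_def)
    have c: "(if int F = int a + int b - int k then -1 else 0) = (if F = a + b - k then -1 else (0::int))"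
      using assms by auto
    have i: "(if int F = int k then 1 else 0) + min (int F - 1 - int a + 1) (min (min (int k - int a + 1) (int b - int k + 1)) (int b + 1 - (int F - 1)))
     + min (int F + 1 - int a + 1) (min (min (int k - int a + 1) (int b - int k + 1)) (int b + 1 - (int F + 1))) - 2 * min (int F - int a + 1) (min (min (int k - int a + 1) (int b - int k + 1)) (int b + 1 - int F))
     = (if int F = int a + int b - int k then -1 else 0)"
      by (rule int_defect) (use 3 assms in auto)
    have nc: "\<not> (F + 1 = a \<or> F = b + 1)" using 3 by auto
    show ?thesis
      unfolding dot e1 e2 e3 ek using i c nc by (simp only: if_False)
  qed
qed

lemma slope_sum_ge:
  fixes Y :: "nat \<Rightarrow> int"
  assumes "x0 \<le> x" "\<forall>t. x0 < t \<and> t \<le> x \<longrightarrow> c \<le> Y t - Y (t - 1)"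
  shows "Y x0 + int (x - x0) * c \<le> Y x"
  using assms
proof (induction x rule: dec_induct)
  case base then show ?case by simp
next
  case (step m)
  then have "Y x0 + int (m - x0) * c \<le> Y m" by auto
  moreover have "c \<le> Y (Suc m) - Y m" using step by (metis diff_Suc_1 le_refl less_Suc_eq_le)
  moreover have "int (Suc m - x0) = int (m - x0) + 1" using step by auto
  ultimately show ?case by (simp add: algebra_simps)
qed

lemma slope_sum_le:
  fixes Y :: "nat \<Rightarrow> int"
  assumes "x0 \<le> x" "\<forall>t. x0 < t \<and> t \<le> x \<longrightarrow> Y t - Y (t - 1) \<le> c"
  shows "Y x \<le> Y x0 + int (x - x0) * c"
  using assms
proof (induction x rule: dec_induct)
  case base then show ?case by simp
next
  case (step m)
  then have "Y m \<le> Y x0 + int (m - x0) * c" by auto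
  moreover have "Y (Suc m) - Y m \<le> c" using step by (metis diff_Suc_1 le_refl less_Suc_eq_le)
  moreover have "int (Suc m - x0) = int (m - x0) + 1" using step by auto
  ultimately show ?case by (simp add: algebra_simps)
qed

lemma cand_ge_tent:
  fixes Y :: "nat \<Rightarrow> int"
  assumes ab: "1 \<le> a" "a \<le> k" "k \<le> b"
    and supp: "\<forall>x. x \<notin> {a..b} \<longrightarrow> Y x = 0"
    and cond: "\<forall>x\<in>{a..b}. Y (x-1) + Y (x+1) - 2 * Y x + (if x = k then 1 else 0) \<le> 0"
  shows "tent k a b x \<le> Y x"
proof -
  define h where "h t = Y t - Y (t - 1)" for t
  have hstep: "h (x+1) \<le> h x - (if x = k then 1 else 0)" if "a \<le> x" "x \<le> b" for x
    using cond that ab unfolding h_def by force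
  have L1: "h y \<le> h x - (if x \<le> k \<and> k < y then 1 else 0)" if "a \<le> x" "x \<le> y" "y \<le> b + 1" for x y
    using that(2)
  proof (induction y rule: dec_induct)
    case base then show ?case by simp
  next
    case (step m)
    then have "h m \<le> h x - (if x \<le> k \<and> k < m then 1 else 0)" by auto
    moreover have "h (m+1) \<le> h m - (if m = k then 1 else 0)" using step that by (intro hstep) auto
    ultimately show ?case using step by (auto split: if_splits)
  qed
  have Ya: "Y (a - 1) = 0" using supp ab by auto
  have Yb: "Y (b + 1) = 0" using supp by auto
  define m where "m = min (int k - int a + 1) (int b - int k + 1)"
  show ?thesis
  proof (cases "a \<le> x \<and> x \<le> b")
    case False then show ?thesis using supp by (auto simp: tent_def)
  next
    case xin: True
    have T1: "tent k a b x \<le> int x - int a + 1" and T2: "tent k a b x \<le> m" and T3: "tent k a b x \<le> int b + 1 - int x"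
      using xin unfolding tent_def m_def by auto
    have leftlin: "Y z \<ge> int z - int a + 1" if "a \<le> z" "\<forall>t. a \<le> t \<and> t \<le> z \<longrightarrow> 1 \<le> h t" for z
    proof -
      have "Y (a-1) + int (z - (a-1)) * 1 \<le> Y z"
        by (rule slope_sum_ge) (use that ab in \<open>auto simp: h_def\<close>)
      then show ?thesis using Ya that ab by auto
    qed
    have rightlin: "Y z \<ge> int b + 1 - int z" if "z \<le> b" "\<forall>t. z < t \<and> t \<le> b + 1 \<longrightarrow> h t \<le> -1" for z
    proof -
      have "Y (b+1) \<le> Y z + int (b + 1 - z) * (-1)"
        by (rule slope_sum_le) (use that in \<open>auto simp: h_def\<close>)
      then show ?thesis using Yb that by auto
    qed
    show ?thesis
    proof (cases "h k \<ge> 1")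
      case hk: True
      have Yk: "Y k \<ge> int k - int a + 1"
        by (rule leftlin) (use ab hk L1 in \<open>force+\<close>)
      show ?thesis
      proof (cases "x \<le> k")
        case True
        have "Y x \<ge> int x - int a + 1"
        proof (rule leftlin)
          show "a \<le> x" using xin by auto
          show "\<forall>t. a \<le> t \<and> t \<le> x \<longrightarrow> 1 \<le> h t"
          proof (intro allI impI)
            fix t assume "a \<le> t \<and> t \<le> x"
            then have "h k \<le> h t - 0" using L1[of t k] True ab by (auto split: if_splits)
            then show "1 \<le> h t" using hk by auto
          qed
        qed
        then show ?thesis using T1 by auto
      next
        case False
        show ?thesis
        proof (cases "h (x+1) \<le> -1")
          case True
          have "Y x \<ge> int b + 1 - int x"
          proof (rule rightlin)
            show "x \<le> b" using xin by auto
            show "\<forall>t. x < t \<and> t \<le> b + 1 \<longrightarrow> h t \<le> -1"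
            proof (intro allI impI)
              fix t assume "x < t \<and> t \<le> b + 1"
              then have "h t \<le> h (x+1)" using L1[of "x+1" t] xin by (auto split: if_splits)
              then show "h t \<le> -1" using True by auto
            qed
          qed
          then show ?thesis using T3 by auto
        next
          case hx: False
          have "Y k + int (x - k) * 0 \<le> Y x"
          proof (rule slope_sum_ge)
            show "k \<le> x" using False by auto
            show "\<forall>t. k < t \<and> t \<le> x \<longrightarrow> 0 \<le> Y t - Y (t - 1)"
            proof (intro allI impI)
              fix t assume t: "k < t \<and> t \<le> x"
              then have "h (x+1) \<le> h t" using L1[of t "x+1"] xin ab by (auto split: if_splits)
              then show "0 \<le> Y t - Y (t - 1)" using hx unfolding h_def by auto
            qed
          qed
          then show ?thesis using Yk T2 unfolding m_def by auto
        qed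
      qed
    next
      case hk: False
      have hr: "h t \<le> -1" if "k < t" "t \<le> b + 1" for t
        using L1[of k t] that ab hk by auto
      have Yk: "Y k \<ge> int b + 1 - int k"
        by (rule rightlin) (use ab hr in auto)
      show ?thesis
      proof (cases "k \<le> x")
        case True
        have "Y x \<ge> int b + 1 - int x"
          by (rule rightlin) (use xin True hr in auto)
        then show ?thesis using T3 by auto
      next
        case False
        show ?thesis
        proof (cases "h x \<ge> 1")
          case True
          have "Y x \<ge> int x - int a + 1"
          proof (rule leftlin)
            show "a \<le> x" using xin by auto
            show "\<forall>t. a \<le> t \<and> t \<le> x \<longrightarrow> 1 \<le> h t"
            proof (intro allI impI)
              fix t assume "a \<le> t \<and> t \<le> x"
              then have "h x \<le> h t" using L1[of t x] xin by (auto split: if_splits)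
              then show "1 \<le> h t" using True by auto
            qed
          qed
          then show ?thesis using T1 by auto
        next
          case hx: False
          have "Y k \<le> Y x + int (k - x) * 0"
          proof (rule slope_sum_le)
            show "x \<le> k" using False by auto
            show "\<forall>t. x < t \<and> t \<le> k \<longrightarrow> Y t - Y (t - 1) \<le> 0"
            proof (intro allI impI)
              fix t assume t: "x < t \<and> t \<le> k"
              then have "h t \<le> h x" using L1[of x t] xin ab by (auto split: if_splits)
              then show "Y t - Y (t - 1) \<le> 0" using hx unfolding h_def by auto
            qed
          qed
          then show ?thesis using Yk T2 unfolding m_def by auto
        qed
      qed
    qed
  qed
qed

lemma minY_tent:
  assumes ab: "1 \<le> a" "a \<le> k" "k \<le> b" "b \<le> n"
  shows "minY chain_ip (chain_e k) {1..n} {a..b} = tent k a b"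
proof -
  have cand_cond: "\<forall>x\<in>{a..b}. Y (x-1) + Y (x+1) - 2 * Y x + (if x = k then 1 else 0) \<le> 0"
    if "is_cand chain_ip (chain_e k) {1..n} {a..b} Y" for Y
  proof
    fix x assume x: "x \<in> {a..b}"
    have "chain_e k x + cyc_dot chain_ip {1..n} Y x \<le> 0" using that x unfolding is_cand_def by auto
    moreover have "cyc_dot chain_ip {1..n} Y x = Y (x-1) + Y (x+1) - 2 * Y x"
      by (rule chain_dot) (use that x ab in \<open>auto simp: is_cand_def\<close>)
    ultimately show "Y (x-1) + Y (x+1) - 2 * Y x + (if x = k then 1 else 0) \<le> 0"
      by (simp add: chain_e_def)
  qed
  have ge: "\<forall>x. tent k a b x \<le> Y x" if "is_cand chain_ip (chain_e k) {1..n} {a..b} Y" for Y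
  proof
    fix x show "tent k a b x \<le> Y x"
      by (rule cand_ge_tent) (use ab that cand_cond[OF that] in \<open>auto simp: is_cand_def\<close>)
  qed
  have tc: "is_cand chain_ip (chain_e k) {1..n} {a..b} (tent k a b)"
    unfolding is_cand_def
  proof (intro conjI ballI allI impI)
    fix x assume "x \<notin> {a..b}" then show "tent k a b x = 0" by (auto simp: tent_def)
  next
    have "tent k a b k \<noteq> 0" using ab by (auto simp: tent_def)
    then show "tent k a b \<noteq> (\<lambda>_. 0)" by (metis)
  next
    fix F assume F: "F \<in> {a..b}"
    show "chain_e k F + cyc_dot chain_ip {1..n} (tent k a b) F \<le> 0"
      using tent_defect[OF ab, of F] F ab by auto
  qed
  have ne: "{a..b} \<noteq> {}" using ab by auto
  have mdef: "minY chain_ip (chain_e k) {1..n} {a..b} = (THE Y. is_cand chain_ip (chain_e k) {1..n} {a..b} Y \<and>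
      (\<forall>Y'. is_cand chain_ip (chain_e k) {1..n} {a..b} Y' \<longrightarrow> (\<forall>x. Y x \<le> Y' x)))"
    using ne by (simp add: minY_def)
  show ?thesis
    unfolding mdef
  proof (rule the_equality)
    show "is_cand chain_ip (chain_e k) {1..n} {a..b} (tent k a b) \<and>
      (\<forall>Y'. is_cand chain_ip (chain_e k) {1..n} {a..b} Y' \<longrightarrow> (\<forall>x. tent k a b x \<le> Y' x))"
      using tc ge by blast
  next
    fix Y assume Y: "is_cand chain_ip (chain_e k) {1..n} {a..b} Y \<and>
      (\<forall>Y'. is_cand chain_ip (chain_e k) {1..n} {a..b} Y' \<longrightarrow> (\<forall>x. Y x \<le> Y' x))"
    show "Y = tent k a b"
    proof
      fix x show "Y x = tent k a b x" using Y tc ge[of Y] by (meson order_antisym)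
    qed
  qed
qed

lemma comp_chain:
  assumes "1 \<le> a" "a \<le> k" "k \<le> b" "{a..b} \<subseteq> S" "a - 1 \<notin> S" "b + 1 \<notin> S"
  shows "comp_of chain_ip S k = {a..b}"
proof -
  define R where "R = {(x, y). x \<in> S \<and> y \<in> S \<and> x \<noteq> y \<and> chain_ip x y \<noteq> 0}"
  have kS: "k \<in> S" using assms by auto
  have adj: "(x, y) \<in> R \<Longrightarrow> y = x + 1 \<or> x = y + 1" for x y
    unfolding R_def chain_ip_def by (auto split: if_splits)
  have c: "comp_of chain_ip S k = {y. (k, y) \<in> R\<^sup>*}" unfolding comp_of_def R_def using kS by simp
  have sub: "y \<in> {a..b}" if "(k, y) \<in> R\<^sup>*" for y
    using that
  proof (induction rule: rtrancl_induct)
    case base then show ?case using assms by auto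
  next
    case (step y z)
    then have "z \<in> S" unfolding R_def by auto
    have "z = y + 1 \<or> y = z + 1" using adj[OF step(2)] .
    moreover have "z \<noteq> a - 1" "z \<noteq> b + 1" using \<open>z \<in> S\<close> assms by auto
    moreover have "a \<le> y" "y \<le> b" using step.IH by auto
    ultimately have "a \<le> z \<and> z \<le> b" using assms(1) by arith
    then show ?case by simp
  qed
  have up: "(k, k + d) \<in> R\<^sup>*" if "k + d \<le> b" for d
    using that
  proof (induction d)
    case 0 then show ?case by simp
  next
    case (Suc d)
    have "k + d \<in> {a..b}" "k + Suc d \<in> {a..b}" using Suc.prems assms by auto
    then have "k + d \<in> S" "k + Suc d \<in> S" using assms(4) by auto
    then have "(k + d, k + Suc d) \<in> R" unfolding R_def chain_ip_def by auto
    moreover have "(k, k + d) \<in> R\<^sup>*" using Suc by simp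
    ultimately show ?case by (meson rtrancl.rtrancl_into_rtrancl)
  qed
  have down: "(k, k - d) \<in> R\<^sup>*" if "a + d \<le> k" for d
    using that
  proof (induction d)
    case 0 then show ?case by simp
  next
    case (Suc d)
    have "k - d \<in> {a..b}" "k - Suc d \<in> {a..b}" using Suc.prems assms by auto
    then have "k - d \<in> S" "k - Suc d \<in> S" using assms(4) by auto
    moreover have "k - d = k - Suc d + 1" using Suc.prems by auto
    ultimately have "(k - d, k - Suc d) \<in> R" unfolding R_def chain_ip_def by auto
    moreover have "(k, k - d) \<in> R\<^sup>*" using Suc by simp
    ultimately show ?case by (meson rtrancl.rtrancl_into_rtrancl)
  qed
  have sup: "y \<in> {y. (k, y) \<in> R\<^sup>*}" if "y \<in> {a..b}" for y
  proof (cases "k \<le> y")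
    case True
    have "k + (y - k) = y" using True by simp
    moreover have "k + (y - k) \<le> b" using True that by auto
    then have "(k, k + (y - k)) \<in> R\<^sup>*" by (rule up)
    ultimately show ?thesis by simp
  next
    case False
    have "k - (k - y) = y" using False by simp
    moreover have "a + (k - y) \<le> k" using False that by auto
    then have "(k, k - (k - y)) \<in> R\<^sup>*" by (rule down)
    ultimately show ?thesis by simp
  qed
  show ?thesis unfolding c using sub sup by blast
qed



definition stinv :: "nat \<Rightarrow> nat \<Rightarrow> nat \<Rightarrow> nat set \<Rightarrow> (nat \<Rightarrow> int) \<Rightarrow> bool" where
 "stinv n k t G Dd \<longleftrightarrow> (\<exists>Z. ms_state chain_ip (chain_e k) {1..n} k t = (G, minY chain_ip (chain_e k) {1..n} G, int t + 1, Z)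
     \<and> (\<forall>F\<in>{1..n}. (int t + 1) * chain_e k F + cyc_dot chain_ip {1..n} Z F = Dd F))"

lemma cyc_dot_add: "cyc_dot ip D (\<lambda>x. Z x + Y x) F = cyc_dot ip D Z F + cyc_dot ip D Y F"
  by (simp add: cyc_dot_def sum.distrib algebra_simps)

lemma stinv_cong: "stinv n k t G Dd \<Longrightarrow> (\<forall>F\<in>{1..n}. Dd F = Dd' F) \<Longrightarrow> stinv n k t G Dd'"
  unfolding stinv_def by auto

lemma stinv_mult: "stinv n k t G Dd \<Longrightarrow> chain_mult_seq n k (Suc t) = minY chain_ip (chain_e k) {1..n} G k"
  unfolding stinv_def chain_mult_seq_def mult_seq_def by auto

lemma stinv_next:
  assumes "stinv n k t G Dd"
  shows "stinv n k (Suc t) (comp_of chain_ip {F\<in>{1..n}. Dd F = 0} k)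
     (\<lambda>F. Dd F + chain_e k F + cyc_dot chain_ip {1..n} (minY chain_ip (chain_e k) {1..n} (comp_of chain_ip {F\<in>{1..n}. Dd F = 0} k)) F)"
proof -
  obtain Z where Z: "ms_state chain_ip (chain_e k) {1..n} k t = (G, minY chain_ip (chain_e k) {1..n} G, int t + 1, Z)"
     "\<forall>F\<in>{1..n}. (int t + 1) * chain_e k F + cyc_dot chain_ip {1..n} Z F = Dd F"
    using assms unfolding stinv_def by blast
  have S: "{F \<in> {1..n}. (int t + 1) * chain_e k F + cyc_dot chain_ip {1..n} Z F = 0} = {F\<in>{1..n}. Dd F = 0}"
    using Z(2) by auto
  define G' where "G' = comp_of chain_ip {F\<in>{1..n}. Dd F = 0} k"
  define Y' where "Y' = minY chain_ip (chain_e k) {1..n} G'"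
  have "ms_state chain_ip (chain_e k) {1..n} k (Suc t) = (G', Y', int t + 1 + 1, \<lambda>x. Z x + Y' x)"
    using Z(1) S unfolding G'_def Y'_def by (simp add: Let_def)
  moreover have "\<forall>F\<in>{1..n}. (int (Suc t) + 1) * chain_e k F + cyc_dot chain_ip {1..n} (\<lambda>x. Z x + Y' x) F
      = Dd F + chain_e k F + cyc_dot chain_ip {1..n} Y' F"
    using Z(2) by (auto simp: cyc_dot_add algebra_simps)
  ultimately show ?thesis unfolding stinv_def G'_def Y'_def by auto
qed

lemma stinv_tent:
  assumes "stinv n k t G Dd" "1 \<le> a" "a \<le> k" "k \<le> b" "b \<le> n"
    "{a..b} \<subseteq> {F\<in>{1..n}. Dd F = 0}" "Dd (a - 1) \<noteq> 0 \<or> a = 1" "Dd (b + 1) \<noteq> 0 \<or> b = n"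
  shows "stinv n k (Suc t) {a..b} (\<lambda>F. Dd F + (if F + 1 = a \<or> F = b + 1 then 1 else if F = a + b - k then -1 else 0))"
proof -
  have c: "comp_of chain_ip {F\<in>{1..n}. Dd F = 0} k = {a..b}"
    by (rule comp_chain) (use assms in auto)
  show ?thesis
    using stinv_next[OF assms(1)] unfolding c minY_tent[OF assms(2-5)]
    by (rule stinv_cong) (use tent_defect[OF assms(2-5)] in \<open>auto simp: algebra_simps\<close>)
qed

lemma stinv_empty:
  assumes "stinv n k t G Dd" "Dd k \<noteq> 0"
  shows "stinv n k (Suc t) {} (\<lambda>F. Dd F + chain_e k F)"
proof -
  have c: "comp_of chain_ip {F\<in>{1..n}. Dd F = 0} k = {}"
    using assms unfolding comp_of_def by auto
  show ?thesis
    using stinv_next[OF assms(1)] unfolding c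
    by (rule stinv_cong) (auto simp: minY_def cyc_dot_def)
qed

lemma stinv_base:
  assumes "1 \<le> k" "k \<le> n"
  shows "stinv n k 0 {1..n} (\<lambda>F. (if F + 1 = 1 \<or> F = n + 1 then 1 else if F = 1 + n - k then -1 else 0))"
  unfolding stinv_def using tent_defect[of 1 k n n] minY_tent[of 1 k n n] assms by auto


definition ind :: "nat \<Rightarrow> nat \<Rightarrow> int" where
  "ind j F = (if F = j then -1 else 0)"

lemma mult_tent:
  assumes "stinv n k t {a..b} Dd" "1 \<le> a" "a \<le> k" "k \<le> b" "b \<le> n"
  shows "chain_mult_seq n k (Suc t) = min (int k - int a + 1) (int b - int k + 1)"
  using stinv_mult[OF assms(1)] minY_tent[OF assms(2-5)] assms(2-5)
  by (simp add: tent_def min_def)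

lemma mult_empty:
  assumes "stinv n k t {} Dd"
  shows "chain_mult_seq n k (Suc t) = 0"
  using stinv_mult[OF assms(1)] by (simp add: minY_def)

lemma shift_step:
  assumes "stinv n k t G (ind (b + 1))" "1 \<le> k" "k \<le> b" "b < n"
  shows "stinv n k (Suc t) {1..b} (ind (b + 1 - k))"
proof -
  have "stinv n k (Suc t) {1..b} (\<lambda>F. ind (b + 1) F + (if F + 1 = 1 \<or> F = b + 1 then 1 else if F = 1 + b - k then -1 else 0))"
    by (rule stinv_tent[OF assms(1)]) (use assms in \<open>auto simp: ind_def\<close>)
  then show ?thesis
    by (rule stinv_cong) (use assms in \<open>auto simp: ind_def\<close>)
qed

lemma full_step:
  assumes "stinv n k t G Dd" "\<forall>F\<in>{1..n}. Dd F = 0" "1 \<le> k" "k \<le> n"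
  shows "stinv n k (Suc t) {1..n} (ind (n + 1 - k))"
proof -
  have "stinv n k (Suc t) {1..n} (\<lambda>F. Dd F + (if F + 1 = 1 \<or> F = n + 1 then 1 else if F = 1 + n - k then -1 else 0))"
    by (rule stinv_tent[OF assms(1)]) (use assms in auto)
  then show ?thesis
    by (rule stinv_cong) (use assms in \<open>auto simp: ind_def\<close>)
qed

lemma base_step:
  assumes "1 \<le> k" "k \<le> n"
  shows "stinv n k 0 {1..n} (ind (n + 1 - k))"
  using stinv_base[OF assms] by (rule stinv_cong) (use assms in \<open>auto simp: ind_def\<close>)

lemma right_step:
  assumes "stinv n k t G (ind (k - 1))" "2 \<le> k" "k \<le> n"
  shows "stinv n k (Suc t) {k..n} (ind n)"
proof -
  have "stinv n k (Suc t) {k..n} (\<lambda>F. ind (k - 1) F + (if F + 1 = k \<or> F = n + 1 then 1 else if F = k + n - k then -1 else 0))"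
    by (rule stinv_tent[OF assms(1)]) (use assms in \<open>auto simp: ind_def\<close>)
  then show ?thesis
    by (rule stinv_cong) (use assms in \<open>auto simp: ind_def\<close>)
qed

lemma empty_step:
  assumes "stinv n k t G (ind k)"
  shows "stinv n k (Suc t) {} (\<lambda>_. 0)"
proof -
  have "stinv n k (Suc t) {} (\<lambda>F. ind k F + chain_e k F)"
    by (rule stinv_empty[OF assms(1)]) (simp add: ind_def)
  then show ?thesis
    by (rule stinv_cong) (auto simp: ind_def chain_e_def)
qed

lemma phase1:
  assumes "1 \<le> k" "t * k + 2 * k \<le> n + 1"
  shows "stinv n k t {1..n - t * k} (ind (n + 1 - (t + 1) * k))"
  using assms(2)
proof (induction t)
  case 0
  then show ?case using base_step[of k n] assms(1) by simp
next
  case (Suc t)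
  have IH: "stinv n k t {1..n - t * k} (ind (n + 1 - (t + 1) * k))"
    using Suc by simp
  define b where "b = n - (t + 1) * k"
  have h: "(t + 1) * k + 2 * k \<le> n + 1" using Suc.prems by simp
  have le: "(t + 1) * k \<le> n" using h assms(1) by linarith
  have e1: "n + 1 - (t + 1) * k = b + 1" unfolding b_def using le by (metis Nat.add_diff_assoc2)
  have e2: "n - Suc t * k = b" unfolding b_def by simp
  have e3: "n + 1 - (Suc t + 1) * k = b + 1 - k"
    unfolding e1[symmetric] diff_diff_left by (simp add: algebra_simps)
  have "stinv n k (Suc t) {1..b} (ind (b + 1 - k))"
    by (rule shift_step) (use IH e1 assms(1) Suc.prems in \<open>auto simp: b_def algebra_simps\<close>)
  then show ?case using e2 e3 by simp
qed


lemma k1_inv: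
  assumes n: "1 \<le> n"
  shows "if t mod (n+1) = n then stinv n 1 t {} (\<lambda>_. 0)
         else stinv n 1 t {1..n - t mod (n+1)} (ind (n - t mod (n+1)))"
proof (induction t)
  case 0
  then show ?case using base_step[of 1 n] n by simp
next
  case (Suc t)
  define u where "u = t mod (n+1)"
  have ul: "u \<le> n" unfolding u_def by (metis Suc_eq_plus1 less_Suc_eq_le mod_less_divisor zero_less_Suc)
  have su: "Suc t mod (n+1) = (if Suc u = n+1 then 0 else Suc u)" unfolding u_def by (simp add: mod_Suc)
  consider "u = n" | "u + 1 = n" | "u + 1 < n" using ul by linarith
  then show ?case
  proof cases
    case 1
    then have "stinv n 1 t {} (\<lambda>_. 0)" using Suc unfolding u_def by simp
    then have "stinv n 1 (Suc t) {1..n} (ind (n + 1 - 1))" by (rule full_step) (use n in auto)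
    then show ?thesis using su 1 n by simp
  next
    case 2
    then have "stinv n 1 t {1..n - u} (ind (n - u))" using Suc unfolding u_def by simp
    moreover have "n - u = 1" using 2 by simp
    ultimately have "stinv n 1 t {1..n - u} (ind 1)" by simp
    then have "stinv n 1 (Suc t) {} (\<lambda>_. 0)" by (rule empty_step)
    then show ?thesis using su 2 by simp
  next
    case 3
    then have "stinv n 1 t {1..n - u} (ind (n - u))" using Suc unfolding u_def by simp
    moreover have eq: "n - u - 1 + 1 = n - u" using 3 by arith
    ultimately have "stinv n 1 t {1..n - u} (ind ((n - u - 1) + 1))" by simp
    then have "stinv n 1 (Suc t) {1..n - u - 1} (ind ((n - u - 1) + 1 - 1))" by (rule shift_step) (use 3 in auto)
    then show ?thesis using su 3 by (simp add: diff_diff_left)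
  qed
qed

lemma k1_mult:
  assumes n: "1 \<le> n" and s: "1 \<le> s"
  shows "chain_mult_seq n 1 s = (if s mod (n + 1) = 0 then 0 else 1)"
proof -
  obtain t where st: "s = Suc t" using s by (cases s) auto
  define u where "u = t mod (n+1)"
  have ul: "u \<le> n" unfolding u_def by (metis Suc_eq_plus1 less_Suc_eq_le mod_less_divisor zero_less_Suc)
  have su: "s mod (n+1) = (if Suc u = n+1 then 0 else Suc u)" unfolding u_def st by (simp add: mod_Suc)
  note I = k1_inv[OF n, of t]
  show ?thesis
  proof (cases "u = n")
    case True
    then have "stinv n 1 t {} (\<lambda>_. 0)" using I unfolding u_def by simp
    then show ?thesis using mult_empty st su True by simp
  next
    case False
    then have "stinv n 1 t {1..n - u} (ind (n - u))" using I unfolding u_def by simp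
    then have "chain_mult_seq n 1 (Suc t) = min (int 1 - int 1 + 1) (int (n - u) - int 1 + 1)"
      by (rule mult_tent) (use False ul in auto)
    then show ?thesis using st su False ul by simp
  qed
qed

lemma part2:
  assumes k: "2 \<le> k" and l: "1 \<le> l" and r: "r \<le> k - 1" and n: "n = l * k + r + (k - 1)"
  shows "(\<forall>s. 1 \<le> s \<and> s \<le> l \<longrightarrow> chain_mult_seq n k s = int k)
    \<and> chain_mult_seq n k (l + 1) = int r
    \<and> (r = k - 1 \<longrightarrow> chain_mult_seq n k (l + 2) = 1)
    \<and> (k = 2 \<and> r = 1 \<longrightarrow> (\<forall>s. l + 3 \<le> s \<and> s \<le> 2 * l + 2 \<longrightarrow> chain_mult_seq n k s = 2)
          \<and> chain_mult_seq n k (2 * l + 3) = 0)"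
proof -
  have P1: "stinv n k t {1..n - t * k} (ind (n + 1 - (t + 1) * k))" if "t < l" for t
  proof (rule phase1)
    show "1 \<le> k" using k by simp
    have "t + 2 \<le> l + 1" using that by simp
    then have "(t + 2) * k \<le> (l + 1) * k" by (rule mult_right_mono) simp
    then show "t * k + 2 * k \<le> n + 1" using n k by (simp add: algebra_simps)
  qed
  have A: "\<forall>s. 1 \<le> s \<and> s \<le> l \<longrightarrow> chain_mult_seq n k s = int k"
  proof (intro allI impI)
    fix s assume s: "1 \<le> s \<and> s \<le> l"
    then obtain t where st: "s = Suc t" by (cases s) auto
    have tl: "t < l" using s st by simp
    have "t + 2 \<le> l + 1" using tl by simp
    then have m: "(t + 2) * k \<le> (l + 1) * k" by (rule mult_right_mono) simp
    have m2: "t * k + 2 * k \<le> l * k + k" using m by (simp add: algebra_simps)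
    have "chain_mult_seq n k (Suc t) = min (int k - int 1 + 1) (int (n - t * k) - int k + 1)"
      by (rule mult_tent[OF P1[OF tl]]) (use k n m2 in auto)
    moreover have "int (n - t * k) - int k + 1 \<ge> int k" using m2 n k by linarith
    ultimately show "chain_mult_seq n k s = int k" using st by simp
  qed
  have Pl: "stinv n k (l - 1) {1..n - (l - 1) * k} (ind (r + k))"
  proof -
    have "stinv n k (l - 1) {1..n - (l - 1) * k} (ind (n + 1 - (l - 1 + 1) * k))"
      using P1[of "l - 1"] l by simp
    moreover have "n + 1 - (l - 1 + 1) * k = r + k" using l n k by simp
    ultimately show ?thesis by simp
  qed
  have "k \<le> l * k" using l by simp
  then have kn: "k \<le> n" using n k by linarith
  have lk: "(l - 1) * k + k = l * k" using l by (metis Suc_diff_1 add.commute less_le_trans mult_Suc zero_less_one)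
  have B: "chain_mult_seq n k (l + 1) = int r \<and>
           (r \<noteq> 0 \<longrightarrow> stinv n k l {1..r + k - 1} (ind r))"
  proof (cases "r = 0")
    case True
    then have "stinv n k (l - 1) {1..n - (l - 1) * k} (ind k)" using Pl by simp
    then have "stinv n k (Suc (l - 1)) {} (\<lambda>_. 0)" by (rule empty_step)
    then have "chain_mult_seq n k (Suc (Suc (l - 1))) = 0" by (rule mult_empty)
    then show ?thesis using True l by simp
  next
    case False
    have "stinv n k (l - 1) {1..n - (l - 1) * k} (ind ((r + k - 1) + 1))" using Pl False by simp
    then have "stinv n k (Suc (l - 1)) {1..r + k - 1} (ind ((r + k - 1) + 1 - k))"
      by (rule shift_step) (use False k n l lk in auto)
    then have S: "stinv n k l {1..r + k - 1} (ind r)" using l False by simp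
    have "chain_mult_seq n k (Suc l) = min (int k - int 1 + 1) (int (r + k - 1) - int k + 1)"
      by (rule mult_tent[OF S]) (use False k n l lk in auto)
    then show ?thesis using S False k r by simp
  qed
  have C: "r = k - 1 \<longrightarrow> chain_mult_seq n k (l + 2) = 1 \<and> stinv n k (Suc l) {k..n} (ind n)"
  proof
    assume rk: "r = k - 1"
    then have "r \<noteq> 0" using k by simp
    then have "stinv n k l {1..r + k - 1} (ind (k - 1))" using B rk by simp
    then have S: "stinv n k (Suc l) {k..n} (ind n)" by (rule right_step) (use k kn in auto)
    have "chain_mult_seq n k (Suc (Suc l)) = min (int k - int k + 1) (int n - int k + 1)"
      by (rule mult_tent[OF S]) (use k kn in auto)
    moreover have "int n - int k + 1 \<ge> 1" using kn by simp
    ultimately show "chain_mult_seq n k (l + 2) = 1 \<and> stinv n k (Suc l) {k..n} (ind n)" using S by simp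
  qed
  have D: "k = 2 \<and> r = 1 \<longrightarrow> (\<forall>s. l + 3 \<le> s \<and> s \<le> 2 * l + 2 \<longrightarrow> chain_mult_seq n k s = 2)
          \<and> chain_mult_seq n k (2 * l + 3) = 0"
  proof
    assume kr: "k = 2 \<and> r = 1"
    then have n2: "n = 2 * l + 2" using n by simp
    have S0: "stinv n k (Suc l) {k..n} (ind n)" using C kr by simp
    have P3: "stinv n k (l + 1 + i) {1..n + 1 - 2 * i} (ind (n - 2 * i))" if "1 \<le> i" "i \<le> l" for i
      using that
    proof (induction i rule: dec_induct)
      case base
      have "stinv n k (Suc l) {k..n} (ind ((n - 1) + 1))" using S0 n2 by simp
      then have "stinv n k (Suc (Suc l)) {1..n - 1} (ind ((n - 1) + 1 - k))"
        by (rule shift_step) (use kr n2 l in auto)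
      then show ?case using kr n2 by simp
    next
      case (step i)
      have eq: "n - 2 * i - 1 + 1 = n - 2 * i" using step n2 by arith
      have "stinv n k (l + 1 + i) {1..n + 1 - 2 * i} (ind (n - 2 * i))"
        using step.IH step.prems by simp
      then have "stinv n k (l + 1 + i) {1..n + 1 - 2 * i} (ind ((n - 2 * i - 1) + 1))"
        unfolding eq .
      then have "stinv n k (Suc (l + 1 + i)) {1..n - 2 * i - 1} (ind ((n - 2 * i - 1) + 1 - k))"
        by (rule shift_step) (use kr n2 step in auto)
      then show ?case using kr n2 step by simp
    qed
    have M: "\<forall>s. l + 3 \<le> s \<and> s \<le> 2 * l + 2 \<longrightarrow> chain_mult_seq n k s = 2"
    proof (intro allI impI)
      fix s assume s: "l + 3 \<le> s \<and> s \<le> 2 * l + 2"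
      define i where "i = s - l - 2"
      have i: "1 \<le> i" "i \<le> l" "s = Suc (l + 1 + i)" using s unfolding i_def by auto
      have "chain_mult_seq n k (Suc (l + 1 + i)) = min (int k - int 1 + 1) (int (n + 1 - 2 * i) - int k + 1)"
        by (rule mult_tent[OF P3[OF i(1,2)]]) (use kr n2 i in auto)
      then show "chain_mult_seq n k s = 2" using i kr n2 by simp
    qed
    have "stinv n k (l + 1 + l) {1..n + 1 - 2 * l} (ind (n - 2 * l))" using P3[of l] l by simp
    then have "stinv n k (l + 1 + l) {1..n + 1 - 2 * l} (ind k)" using kr n2 by simp
    then have "stinv n k (Suc (l + 1 + l)) {} (\<lambda>_. 0)" by (rule empty_step)
    then have "chain_mult_seq n k (Suc (Suc (l + 1 + l))) = 0" by (rule mult_empty)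
    then show "(\<forall>s. l + 3 \<le> s \<and> s \<le> 2 * l + 2 \<longrightarrow> chain_mult_seq n k s = 2)
          \<and> chain_mult_seq n k (2 * l + 3) = 0" using M by (simp add: numeral_eq_Suc)
  qed
  show ?thesis using A B C D by blast
qed

theorem proposition6:
  fixes n k :: nat
  assumes "k \<ge> 1" and "2 * k - 1 \<le> n"
  shows "(k = 1 \<longrightarrow> (\<forall>s\<ge>1. chain_mult_seq n k s = (if s mod (n + 1) = 0 then 0 else 1)))
     \<and> (\<forall>l r. k \<ge> 2 \<longrightarrow> l \<ge> 1 \<longrightarrow> r \<le> k - 1 \<longrightarrow> n = l * k + r + (k - 1) \<longrightarrow>
          ((r < k - 1 \<longrightarrow> (\<forall>s. 1 \<le> s \<and> s \<le> l \<longrightarrow> chain_mult_seq n k s = int k)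
                         \<and> chain_mult_seq n k (l + 1) = int r)
         \<and> (r = k - 1 \<and> k \<ge> 3 \<longrightarrow> (\<forall>s. 1 \<le> s \<and> s \<le> l \<longrightarrow> chain_mult_seq n k s = int k)
                         \<and> chain_mult_seq n k (l + 1) = int k - 1
                         \<and> chain_mult_seq n k (l + 2) = 1)
         \<and> (k = 2 \<and> r = 1 \<longrightarrow> (\<forall>s. 1 \<le> s \<and> s \<le> l \<longrightarrow> chain_mult_seq n k s = 2)
                         \<and> chain_mult_seq n k (l + 1) = 1
                         \<and> chain_mult_seq n k (l + 2) = 1
                         \<and> (\<forall>s. l + 3 \<le> s \<and> s \<le> 2 * l + 2 \<longrightarrow> chain_mult_seq n k s = 2)
                         \<and> chain_mult_seq n k (2 * l + 3) = 0)))"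
proof -
  have A: "k = 1 \<longrightarrow> (\<forall>s\<ge>1. chain_mult_seq n k s = (if s mod (n + 1) = 0 then 0 else 1))"
  proof (intro impI allI)
    fix s :: nat assume k1: "k = 1" and s: "1 \<le> s"
    have "1 \<le> n" using assms k1 by simp
    then show "chain_mult_seq n k s = (if s mod (n + 1) = 0 then 0 else 1)" using k1_mult s k1 by simp
  qed
  have B: "\<forall>l r. k \<ge> 2 \<longrightarrow> l \<ge> 1 \<longrightarrow> r \<le> k - 1 \<longrightarrow> n = l * k + r + (k - 1) \<longrightarrow>
          ((r < k - 1 \<longrightarrow> (\<forall>s. 1 \<le> s \<and> s \<le> l \<longrightarrow> chain_mult_seq n k s = int k)
                         \<and> chain_mult_seq n k (l + 1) = int r)
         \<and> (r = k - 1 \<and> k \<ge> 3 \<longrightarrow> (\<forall>s. 1 \<le> s \<and> s \<le> l \<longrightarrow> chain_mult_seq n k s = int k)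
                         \<and> chain_mult_seq n k (l + 1) = int k - 1
                         \<and> chain_mult_seq n k (l + 2) = 1)
         \<and> (k = 2 \<and> r = 1 \<longrightarrow> (\<forall>s. 1 \<le> s \<and> s \<le> l \<longrightarrow> chain_mult_seq n k s = 2)
                         \<and> chain_mult_seq n k (l + 1) = 1
                         \<and> chain_mult_seq n k (l + 2) = 1
                         \<and> (\<forall>s. l + 3 \<le> s \<and> s \<le> 2 * l + 2 \<longrightarrow> chain_mult_seq n k s = 2)
                         \<and> chain_mult_seq n k (2 * l + 3) = 0))"
  proof (intro allI impI)
    fix l r assume h: "2 \<le> k" "1 \<le> l" "r \<le> k - 1" "n = l * k + r + (k - 1)"
    note P = part2[OF h]
    have rk: "r = k - 1 \<Longrightarrow> int r = int k - 1" using h by simp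
    show "(r < k - 1 \<longrightarrow> (\<forall>s. 1 \<le> s \<and> s \<le> l \<longrightarrow> chain_mult_seq n k s = int k)
                         \<and> chain_mult_seq n k (l + 1) = int r)
         \<and> (r = k - 1 \<and> k \<ge> 3 \<longrightarrow> (\<forall>s. 1 \<le> s \<and> s \<le> l \<longrightarrow> chain_mult_seq n k s = int k)
                         \<and> chain_mult_seq n k (l + 1) = int k - 1
                         \<and> chain_mult_seq n k (l + 2) = 1)
         \<and> (k = 2 \<and> r = 1 \<longrightarrow> (\<forall>s. 1 \<le> s \<and> s \<le> l \<longrightarrow> chain_mult_seq n k s = 2)
                         \<and> chain_mult_seq n k (l + 1) = 1
                         \<and> chain_mult_seq n k (l + 2) = 1
                         \<and> (\<forall>s. l + 3 \<le> s \<and> s \<le> 2 * l + 2 \<longrightarrow> chain_mult_seq n k s = 2)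
                         \<and> chain_mult_seq n k (2 * l + 3) = 0)"
      using P rk by auto
  qed
  show ?thesis using A B by blast
qed

end
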